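(* Fix $s,s'\in S$ and $a\in Act(s)$ with interface function $I_{s,a}$. Let $(\omega_1,\dots,\omega_M)\in\Omega^M$ be $M\in\mathbb{N}$ i.i.d. samples from $\mathbb{P}$, let $F_i=F(\mathcal{T}^{-1}(s),a,\omega_i)$, and define $$\check M=|\{i\in\{1,\dots,M\}: F_i\subseteq\mathcal{T}^{-1}(s')\}|,\qquad \hat M=|\{i\in\{1,\dots,M\}: F_i\cap\mathcal{T}^{-1}(s')\ne\emptyset\}|.$$ For $\beta\in(0,1)$ let $\check P_{lb}=0$ if $\check M=0$, and otherwise let $\check P_{lb}$ be the solution of $\frac{\beta}{2}=\sum_{\ell=\check M}^{M}\binom{M}{\ell}\check P_{lb}^{\ell}(1-\check P_{lb})^{M-\ell}$; let $\hat P_{ub}=1$ if $\hat M=M$, and otherwise let $\hat P_{ub}$ be the solution of $\frac{\beta}{2}=\sum_{\ell=0}^{\hat M}\binom{M}{\ell}\hat P_{ub}^{\ell}(1-\hat P_{ub})^{M-\ell}$. Then $$\mathbb{P}^M\Big\{(\omega_1,\dots,\omega_M)\in\Omega^M:\ \check P_{lb}\le\check p(s,a,s')\ \wedge\ \hat p(s,a,s')\le\hat P_{ub}\Big\}\ge 1-\beta.$$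
   Context: System: $x_{k+1}=f(x_k,u_k,\eta_k)$ with $x_k\in\mathcal{X}\subset\mathbb{R}^n$ compact, $u_k\in\mathcal{U}\subseteq\mathbb{R}^m$, $\eta_k:\Omega\to\mathcal{W}\subseteq\mathbb{R}^p$ i.i.d. on $(\Omega,\mathcal{F},\mathbb{P})$, $f:\mathcal{X}\times\mathcal{U}\times\mathcal{W}\to\mathcal{X}$; $\eta(\omega)$ denotes a noise realisation. $\mathcal{X}$ is partitioned into disjoint convex polytopes $R_1,\dots,R_v$, $R_\star=\mathbb{R}^n\setminus\mathcal{X}$, abstract states $S=\{s_1,\dots,s_v,s_\star\}$, abstraction map $\mathcal{T}:\mathbb{R}^n\to S$ with $\mathcal{T}(x)=s_i\iff x\in R_i$, $\mathcal{T}^{-1}(s)$ the region of $s$. $\bar{\mathbf u}=\{\bar u_1,\dots,\bar u_J\}\subset\mathcal{U}$ is a finite set of representative inputs; $Act$ is a finite action set with enabled actions $Act(s)$, and for $a\in Act(s)$ the interface function is $I_{s,a}:\mathcal{T}^{-1}(s)\to\bar{\mathbf u}$. Forward reachable set: $F(X,a,\omega)=\{f(x,u,\eta(\omega)): x\in X,\ u=I_{\mathcal{T}(x),a}(x)\}$. For compact $X'$: $\psi(x,X',a)=\mathbb{P}\{\omega: f(x,I_{\mathcal{T}(x),a}(x),\eta(\omega))\in X'\}$, and $\check p(s,a,s')=\min_{x\in\mathcal{T}^{-1}(s)}\psi(x,\mathcal{T}^{-1}(s'),a)$, $\hat p(s,a,s')=\max_{x\in\mathcal{T}^{-1}(s)}\psi(x,\mathcal{T}^{-1}(s'),a)$.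 *)

theory Defs
  imports "HOL-Probability.Probability"
begin

text \<open>Abstract states: Reg i stands for s_i (i in 1..v), Star for the sink state s_star.\<close>
datatype abs_state = Reg nat | Star

definition abs_states :: "nat \<Rightarrow> abs_state set" where
  "abs_states v = Reg ` {1..v} \<union> {Star}"

text \<open>Region of an abstract state (inverse image under the abstraction map).\<close>
fun region :: "(nat \<Rightarrow> 'x set) \<Rightarrow> 'x set \<Rightarrow> abs_state \<Rightarrow> 'x set" where
  "region R X (Reg i) = R i"
| "region R X Star = - X"

definition absmap :: "(nat \<Rightarrow> 'x set) \<Rightarrow> nat \<Rightarrow> 'x set \<Rightarrow> 'x \<Rightarrow> abs_state" where
  "absmap R v X x = (if (\<exists>i\<in>{1..v}. x \<in> R i) then Reg (THE i. i \<in> {1..v} \<and> x \<in> R i) else Star)"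

definition convex_polytope :: "'x::euclidean_space set \<Rightarrow> bool" where
  "convex_polytope P \<longleftrightarrow> bounded P \<and>
     (\<exists>H. finite H \<and> P = \<Inter> H \<and>
        (\<forall>h\<in>H. \<exists>c b. h = {x. c \<bullet> x \<le> b} \<or> h = {x. c \<bullet> x < b}))"

definition imdp_system ::
  "'x::euclidean_space set \<Rightarrow> 'u::euclidean_space set \<Rightarrow> 'w::euclidean_space set \<Rightarrow>
   ('x \<Rightarrow> 'u \<Rightarrow> 'w \<Rightarrow> 'x) \<Rightarrow> (nat \<Rightarrow> 'x set) \<Rightarrow> nat \<Rightarrow> 'u set \<Rightarrow>
   'act set \<Rightarrow> (abs_state \<Rightarrow> 'act set) \<Rightarrow> (abs_state \<Rightarrow> 'act \<Rightarrow> 'x \<Rightarrow> 'u) \<Rightarrow>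
   'o measure \<Rightarrow> ('o \<Rightarrow> 'w) \<Rightarrow> bool" where
  "imdp_system X U W f R v ubar Acts Act I P \<eta> \<longleftrightarrow>
     compact X
   \<and> (\<forall>x\<in>X. \<forall>u\<in>U. \<forall>w\<in>W. f x u w \<in> X)
   \<and> (\<forall>i\<in>{1..v}. convex_polytope (R i) \<and> R i \<noteq> {})
   \<and> (\<forall>i\<in>{1..v}. \<forall>j\<in>{1..v}. i \<noteq> j \<longrightarrow> R i \<inter> R j = {})
   \<and> (\<Union>i\<in>{1..v}. R i) = X
   \<and> finite ubar \<and> ubar \<subseteq> U
   \<and> finite Acts \<and> (\<forall>s\<in>abs_states v. Act s \<subseteq> Acts)
   \<and> (\<forall>s\<in>abs_states v. \<forall>a\<in>Act s. \<forall>x\<in>region R X s. I s a x \<in> ubar)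
   \<and> prob_space P
   \<and> \<eta> \<in> borel_measurable P
   \<and> (\<forall>\<omega>\<in>space P. \<eta> \<omega> \<in> W)"

definition fwd :: "('x \<Rightarrow> 'u \<Rightarrow> 'w \<Rightarrow> 'x) \<Rightarrow> (abs_state \<Rightarrow> 'act \<Rightarrow> 'x \<Rightarrow> 'u) \<Rightarrow>
    ('x \<Rightarrow> abs_state) \<Rightarrow> ('o \<Rightarrow> 'w) \<Rightarrow> 'x set \<Rightarrow> 'act \<Rightarrow> 'o \<Rightarrow> 'x set" where
  "fwd f I T \<eta> Y a \<omega> = {f x (I (T x) a x) (\<eta> \<omega>) | x. x \<in> Y}"

definition psi :: "'o measure \<Rightarrow> ('x \<Rightarrow> 'u \<Rightarrow> 'w \<Rightarrow> 'x) \<Rightarrow> (abs_state \<Rightarrow> 'act \<Rightarrow> 'x \<Rightarrow> 'u) \<Rightarrow>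
    ('x \<Rightarrow> abs_state) \<Rightarrow> ('o \<Rightarrow> 'w) \<Rightarrow> 'x \<Rightarrow> 'x set \<Rightarrow> 'act \<Rightarrow> real" where
  "psi P f I T \<eta> x Y a = measure P {\<omega> \<in> space P. f x (I (T x) a x) (\<eta> \<omega>) \<in> Y}"

definition cp_lower :: "nat \<Rightarrow> nat \<Rightarrow> real \<Rightarrow> real" where
  "cp_lower M k \<beta> = (if k = 0 then 0 else
     (THE p. 0 \<le> p \<and> p \<le> 1 \<and>
        \<beta> / 2 = (\<Sum>l = k..M. real (M choose l) * p ^ l * (1 - p) ^ (M - l))))"

definition cp_upper :: "nat \<Rightarrow> nat \<Rightarrow> real \<Rightarrow> real" where
  "cp_upper M k \<beta> = (if k = M then 1 else
     (THE p. 0 \<le> p \<and> p \<le> 1 \<and>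
        \<beta> / 2 = (\<Sum>l = 0..k. real (M choose l) * p ^ l * (1 - p) ^ (M - l))))"

end

theory Submission
  imports Defs
begin

definition bt :: "nat \<Rightarrow> nat \<Rightarrow> real \<Rightarrow> real" where
  "bt n l p = real (n choose l) * p ^ l * (1 - p) ^ (n - l)"

definition G :: "nat \<Rightarrow> nat \<Rightarrow> real \<Rightarrow> real" where
  "G n k p = (\<Sum>l = k..n. bt n l p)"

lemma bt_nonneg: "0 \<le> p \<Longrightarrow> p \<le> 1 \<Longrightarrow> 0 \<le> bt n l p"
  unfolding bt_def by simp

lemma deriv_bt:
  assumes "1 \<le> l" "l \<le> n"
  shows "DERIV (bt n l) p :> real n * (bt (n-1) (l-1) p - bt (n-1) l p)"
proof -
  have d: "DERIV (bt n l) p :> real (n choose l) * (real l * p^(l-1) * (1-p)^(n-l)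
      - real (n-l) * p^l * (1-p)^(n-l-1))"
    unfolding bt_def
    by (auto intro!: derivative_eq_intros simp: algebra_simps)
  have e1: "real (n choose l) * real l = real n * real ((n-1) choose (l-1))"
    using times_binomial_minus1_eq[of l n] assms by (simp flip: of_nat_mult add: mult.commute)
  have e2: "real (n choose l) * real (n-l) = real n * real ((n-1) choose l)"
    using binomial_absorb_comp[of n l] by (simp flip: of_nat_mult add: mult.commute)
  have "real (n choose l) * (real l * p^(l-1) * (1-p)^(n-l)
      - real (n-l) * p^l * (1-p)^(n-l-1))
      = (real (n choose l) * real l) * p^(l-1) * (1-p)^(n-l)
      - (real (n choose l) * real (n-l)) * p^l * (1-p)^(n-l-1)"
    by (simp add: algebra_simps)
  also have "\<dots> = real n * (bt (n-1) (l-1) p - bt (n-1) l p)"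
    unfolding e1 e2 bt_def using assms by (simp add: algebra_simps)
  finally show ?thesis using d by simp
qed

lemma deriv_G:
  assumes "1 \<le> k" "k \<le> Suc n"
  shows "DERIV (G n k) p :> real n * bt (n-1) (k-1) p"
  using assms(2)
proof (induction k rule: inc_induct)
  case base
  have "G n (Suc n) = (\<lambda>_. 0)" by (rule ext) (simp add: G_def)
  moreover have "real n * bt (n-1) n p = 0" by (cases n) (auto simp: bt_def)
  ultimately show ?case by (metis DERIV_const diff_Suc_1)
next
  case (step m)
  have eq: "G n m = (\<lambda>p. bt n m p + G n (Suc m) p)"
    using step(2) by (intro ext) (simp add: G_def sum.atLeast_Suc_atMost)
  have "DERIV (\<lambda>p. bt n m p + G n (Suc m) p) p :>
     real n * (bt (n-1) (m-1) p - bt (n-1) m p) + real n * bt (n-1) (Suc m - 1) p"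
    using step assms(1) by (intro derivative_intros deriv_bt) auto
  then show ?case unfolding eq by (simp add: algebra_simps)
qed

lemma G_0: "1 \<le> k \<Longrightarrow> G n k 0 = 0"
  unfolding G_def bt_def by (intro sum.neutral) auto

lemma G_1: assumes "k \<le> n" shows "G n k 1 = 1"
proof -
  have "G n k 1 = (\<Sum>l = k..n. if l = n then 1 else 0)"
    unfolding G_def bt_def by (intro sum.cong) auto
  also have "\<dots> = 1" using assms by (simp add: sum.delta)
  finally show ?thesis .
qed

lemma G_cont: "isCont (G n k) p"
proof (cases "1 \<le> k \<and> k \<le> Suc n")
  case True then show ?thesis using deriv_G DERIV_isCont by blast
next
  case False
  then have "G n k = (\<lambda>p. if k = 0 then (\<Sum>l = 0..n. bt n l p) else 0)"
    by (intro ext) (auto simp: G_def)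
  moreover have "isCont (\<lambda>p. (\<Sum>l = 0..n. bt n l p)) p"
    unfolding bt_def by (intro continuous_intros)
  ultimately show ?thesis by (cases "k = 0") auto
qed

lemma G_strict:
  assumes "1 \<le> k" "k \<le> n" "0 \<le> p" "p < p'" "p' \<le> 1"
  shows "G n k p < G n k p'"
proof (rule DERIV_pos_imp_increasing_open[OF assms(4)])
  fix x assume x: "p < x" "x < p'"
  have "0 < real n * bt (n-1) (k-1) x"
    using assms x by (auto simp: bt_def intro!: mult_pos_pos)
  then show "\<exists>y. DERIV (G n k) x :> y \<and> 0 < y"
    using deriv_G[of k n x] assms by auto
next
  show "continuous_on {p..p'} (G n k)"
    using G_cont by (intro continuous_at_imp_continuous_on) auto
qed

lemma G_mono:
  assumes "1 \<le> k" "k \<le> n" "0 \<le> p" "p \<le> p'" "p' \<le> 1"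
  shows "G n k p \<le> G n k p'"
  using G_strict[OF assms(1,2,3) _ assms(5)] assms(4) by (cases "p = p'") auto

lemma sum_bt_all: "(\<Sum>l = 0..n. bt n l p) = 1"
proof -
  have "(p + (1 - p)) ^ n = (\<Sum>l\<le>n. real (n choose l) * p ^ l * (1 - p) ^ (n - l))"
    by (rule binomial_ring)
  then show ?thesis by (simp add: bt_def atLeast0AtMost)
qed

lemma sum_bt_low: assumes "k \<le> n" shows "(\<Sum>l = 0..k. bt n l p) = 1 - G n (Suc k) p"
proof -
  have "(\<Sum>l = 0..k + (n - k). bt n l p) = (\<Sum>l = 0..k. bt n l p) + (\<Sum>l = k+1..k + (n - k). bt n l p)"
    by (rule sum.ub_add_nat) simp
  then show ?thesis using assms sum_bt_all[of n p] by (simp add: G_def)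
qed

lemma G_unique:
  assumes "1 \<le> k" "k \<le> n" "0 < c" "c < 1"
  shows "\<exists>!p. 0 \<le> p \<and> p \<le> 1 \<and> c = G n k p"
proof -
  obtain x where x: "0 \<le> x" "x \<le> 1" "G n k x = c"
    using IVT[of "G n k" 0 c 1] G_0 G_1 assms G_cont by auto
  show ?thesis
  proof (rule ex1I[of _ x])
    fix y assume y: "0 \<le> y \<and> y \<le> 1 \<and> c = G n k y"
    show "y = x"
    proof (rule ccontr)
      assume "y \<noteq> x"
      then consider "y < x" | "x < y" by linarith
      then show False using G_strict[OF assms(1,2)] x y by cases fastforce+
    qed
  qed (use x in auto)
qed

lemma cpl:
  assumes "1 \<le> k" "k \<le> n" "0 < \<beta>" "\<beta> < 1"
  shows "0 \<le> cp_lower n k \<beta> \<and> cp_lower n k \<beta> \<le> 1 \<and> G n k (cp_lower n k \<beta>) = \<beta> / 2"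
proof -
  have "\<exists>!p. 0 \<le> p \<and> p \<le> 1 \<and> \<beta>/2 = G n k p"
    using G_unique[of k n "\<beta>/2"] assms by auto
  from theI'[OF this] show ?thesis
    using assms unfolding cp_lower_def G_def bt_def by auto
qed

lemma cpu:
  assumes "k < n" "0 < \<beta>" "\<beta> < 1"
  shows "0 \<le> cp_upper n k \<beta> \<and> cp_upper n k \<beta> \<le> 1 \<and> G n (Suc k) (cp_upper n k \<beta>) = 1 - \<beta> / 2"
proof -
  have eq: "(\<Sum>l = 0..k. real (n choose l) * p ^ l * (1 - p) ^ (n - l)) = 1 - G n (Suc k) p" for p
    using sum_bt_low[of k n p] assms by (simp add: bt_def)
  have "\<exists>!p. 0 \<le> p \<and> p \<le> 1 \<and> 1 - \<beta>/2 = G n (Suc k) p"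
    using G_unique assms by auto
  then have "\<exists>!p. 0 \<le> p \<and> p \<le> 1 \<and> \<beta>/2 = (\<Sum>l = 0..k. real (n choose l) * p ^ l * (1 - p) ^ (n - l))"
    unfolding eq by (smt (verit, ccfv_SIG))
  from theI'[OF this] show ?thesis
    using assms unfolding cp_upper_def eq by auto
qed

lemma cover_lower:
  assumes q: "0 \<le> q" "q \<le> 1" and b: "0 < \<beta>" "\<beta> < 1"
  shows "(\<Sum>l \<in> {l\<in>{0..n}. q < cp_lower n l \<beta>}. bt n l q) \<le> \<beta> / 2"
proof (cases "{l\<in>{0..n}. q < cp_lower n l \<beta>} = {}")
  case True then show ?thesis using b by (simp only: True sum.empty)
next
  case False
  define B where "B = {l\<in>{0..n}. q < cp_lower n l \<beta>}"
  define k where "k = Min B"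
  have fin: "finite B" by (simp add: B_def)
  have kB: "k \<in> B" unfolding k_def using fin False by (intro Min_in) (auto simp: B_def)
  have k0: "k \<noteq> 0" using kB q by (cases "k = 0") (auto simp: B_def cp_lower_def)
  have kn: "k \<le> n" using kB by (simp add: B_def)
  have sub: "B \<subseteq> {k..n}" using fin by (auto simp: k_def B_def)
  have "(\<Sum>l\<in>B. bt n l q) \<le> (\<Sum>l\<in>{k..n}. bt n l q)"
    by (rule sum_mono2[OF _ sub]) (use q in \<open>auto intro: bt_nonneg\<close>)
  also have "\<dots> = G n k q" by (simp add: G_def)
  also have "\<dots> \<le> G n k (cp_lower n k \<beta>)"
    using cpl[of k n \<beta>] k0 kn b q kB by (intro G_mono) (auto simp: B_def)
  also have "\<dots> = \<beta> / 2" using cpl[of k n \<beta>] k0 kn b by auto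
  finally show ?thesis by (simp add: B_def)
qed

lemma cover_upper:
  assumes q: "0 \<le> q" "q \<le> 1" and b: "0 < \<beta>" "\<beta> < 1"
  shows "(\<Sum>l \<in> {l\<in>{0..n}. cp_upper n l \<beta> < q}. bt n l q) \<le> \<beta> / 2"
proof (cases "{l\<in>{0..n}. cp_upper n l \<beta> < q} = {}")
  case True then show ?thesis using b by (simp only: True sum.empty)
next
  case False
  define B where "B = {l\<in>{0..n}. cp_upper n l \<beta> < q}"
  define k where "k = Max B"
  have fin: "finite B" by (simp add: B_def)
  have kB: "k \<in> B" unfolding k_def using fin False by (intro Max_in) (auto simp: B_def)
  have kn: "k < n" using kB q by (cases "k = n") (auto simp: B_def cp_upper_def)
  have sub: "B \<subseteq> {0..k}" using fin by (auto simp: k_def B_def)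
  have "(\<Sum>l\<in>B. bt n l q) \<le> (\<Sum>l\<in>{0..k}. bt n l q)"
    by (rule sum_mono2[OF _ sub]) (use q in \<open>auto intro: bt_nonneg\<close>)
  also have "\<dots> = 1 - G n (Suc k) q" using kn by (simp add: sum_bt_low)
  also have "\<dots> \<le> 1 - G n (Suc k) (cp_upper n k \<beta>)"
    using cpu[of k n \<beta>] kn b q kB G_mono[of "Suc k" n "cp_upper n k \<beta>" q] by (auto simp: B_def)
  also have "\<dots> = \<beta> / 2" using cpu[of k n \<beta>] kn b by auto
  finally show ?thesis by (simp add: B_def)
qed


lemma bt_pascal:
  "bt (Suc n) l q = (1-q) * bt n l q + (if l = 0 then 0 else q * bt n (l-1) q)"
proof (cases l)
  case 0 then show ?thesis by (simp add: bt_def)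
next
  case (Suc m)
  consider "m < n" | "m = n" | "m > n" by linarith
  then show ?thesis
  proof cases
    case 1
    then have "Suc n - Suc m = Suc (n - Suc m)" "n - m = Suc (n - Suc m)" by auto
    then show ?thesis using Suc by (simp add: bt_def algebra_simps)
  next
    case 2 then show ?thesis using Suc by (simp add: bt_def algebra_simps)
  next
    case 3 then show ?thesis using Suc by (simp add: bt_def binomial_eq_0)
  qed
qed

lemma card_real_sum: "finite J \<Longrightarrow> real (card {i\<in>J. Q i}) = (\<Sum>i\<in>J. if Q i then 1 else 0)"
proof -
  assume "finite J"
  have "{i\<in>J. Q i} = J \<inter> Collect Q" by auto
  then show ?thesis using \<open>finite J\<close> by (simp add: sum.If_cases)
qed

lemma meas_card:
  assumes "A \<in> sets P" "finite J"
  shows "{\<omega> \<in> space (PiM J (\<lambda>_. P)). card {i\<in>J. \<omega> i \<in> A} = l} \<in> sets (PiM J (\<lambda>_. P))"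
proof -
  have "{\<omega> \<in> space (PiM J (\<lambda>_. P)). card {i\<in>J. \<omega> i \<in> A} = l} =
        {\<omega> \<in> space (PiM J (\<lambda>_. P)). (\<Sum>i\<in>J. indicator A (\<omega> i) :: real) = real l}"
  proof -
    have "real (card {i\<in>J. \<omega> i \<in> A}) = (\<Sum>i\<in>J. indicator A (\<omega> i) :: real)" for \<omega>
      using card_real_sum[OF assms(2), of "\<lambda>i. \<omega> i \<in> A"] by (simp add: indicator_def of_bool_def)
    then show ?thesis by (intro Collect_cong conj_cong refl) (metis of_nat_eq_iff)
  qed
  also have "\<dots> \<in> sets (PiM J (\<lambda>_. P))"
    using assms by measurable
  finally show ?thesis .
qed

lemma binom_dist:
  assumes P: "prob_space P" and A: "A \<in> sets P" and J: "finite J"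
  shows "emeasure (PiM J (\<lambda>_. P)) {\<omega> \<in> space (PiM J (\<lambda>_. P)). card {i\<in>J. \<omega> i \<in> A} = l}
       = ennreal (bt (card J) l (measure P A))"
  using J
proof (induction J arbitrary: l rule: finite_induct)
  case empty
  show ?case by (cases l) (auto simp: PiM_empty bt_def)
next
  case (insert j J)
  interpret P: prob_space P by (rule P)
  interpret PP: product_prob_space "\<lambda>_. P" by unfold_locales
  define q where "q = measure P A"
  define E where "E = (\<lambda>l. {\<omega> \<in> space (PiM J (\<lambda>_. P)). card {i\<in>J. \<omega> i \<in> A} = l})"
  define E' where "E' = {\<omega> \<in> space (PiM (insert j J) (\<lambda>_. P)). card {i\<in>insert j J. \<omega> i \<in> A} = l}"
  have Em: "E k \<in> sets (PiM J (\<lambda>_. P))" for k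
    unfolding E_def by (rule meas_card[OF A insert(1)])
  have E'm: "E' \<in> sets (PiM (insert j J) (\<lambda>_. P))"
    unfolding E'_def by (rule meas_card[OF A]) (use insert in simp)
  have q01: "0 \<le> q" "q \<le> 1" by (auto simp: q_def)
  have cA: "emeasure P A = ennreal q" by (simp add: q_def P.emeasure_eq_measure)
  have cnA: "emeasure P (space P - A) = ennreal (1 - q)"
    using P.prob_compl[OF A] by (simp add: q_def P.emeasure_eq_measure)
  have inner: "(\<integral>\<^sup>+ y. indicator E' (\<omega> (j := y)) \<partial>P)
      = ennreal (1 - q) * indicator (E l) \<omega> + (if l = 0 then 0 else ennreal q * indicator (E (l-1)) \<omega>)"
    if \<omega>: "\<omega> \<in> space (PiM J (\<lambda>_. P))" for \<omega>
  proof -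
    define c where "c = card {i\<in>J. \<omega> i \<in> A}"
    have card_upd: "card {i\<in>insert j J. (\<omega> (j := y)) i \<in> A} = c + (if y \<in> A then 1 else 0)" for y
    proof -
      have "{i\<in>insert j J. (\<omega> (j := y)) i \<in> A} = (if y \<in> A then insert j {i\<in>J. \<omega> i \<in> A} else {i\<in>J. \<omega> i \<in> A})"
        using insert(2) by auto
      then show ?thesis using insert(1,2) by (simp add: c_def)
    qed
    have sp: "\<omega> (j := y) \<in> space (PiM (insert j J) (\<lambda>_. P))" if "y \<in> space P" for y
      using \<omega> that insert(2) by (auto simp: space_PiM PiE_def extensional_def Pi_def)
    have "(\<integral>\<^sup>+ y. indicator E' (\<omega> (j := y)) \<partial>P)
       = (\<integral>\<^sup>+ y. indicator (E l) \<omega> * indicator (space P - A) y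
              + (if l = 0 then 0 else indicator (E (l-1)) \<omega> * indicator A y) \<partial>P)"
    proof (rule nn_integral_cong)
      fix y assume y: "y \<in> space P"
      show "indicator E' (\<omega> (j := y)) = indicator (E l) \<omega> * indicator (space P - A) y
              + (if l = 0 then 0 else indicator (E (l-1)) \<omega> * indicator A y :: ennreal)"
        using sp[OF y] y \<omega> card_upd[of y]
        by (auto simp: E'_def E_def c_def indicator_def)
    qed
    also have "\<dots> = indicator (E l) \<omega> * emeasure P (space P - A)
        + (if l = 0 then 0 else indicator (E (l-1)) \<omega> * emeasure P A)"
      using A by (subst nn_integral_add) (auto simp: nn_integral_cmult)
    also have "\<dots> = ennreal (1 - q) * indicator (E l) \<omega> + (if l = 0 then 0 else ennreal q * indicator (E (l-1)) \<omega>)"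
      unfolding cA cnA by (simp add: mult.commute)
    finally show ?thesis .
  qed
  have "emeasure (PiM (insert j J) (\<lambda>_. P)) E'
      = (\<integral>\<^sup>+ \<omega>. indicator E' \<omega> \<partial>PiM (insert j J) (\<lambda>_. P))"
    using E'm by simp
  also have "\<dots> = (\<integral>\<^sup>+ \<omega>. (\<integral>\<^sup>+ y. indicator E' (\<omega> (j := y)) \<partial>P) \<partial>PiM J (\<lambda>_. P))"
    using insert(1,2) E'm by (intro PP.product_nn_integral_insert) auto
  also have "\<dots> = (\<integral>\<^sup>+ \<omega>. ennreal (1 - q) * indicator (E l) \<omega> + (if l = 0 then 0 else ennreal q * indicator (E (l-1)) \<omega>) \<partial>PiM J (\<lambda>_. P))"
    by (intro nn_integral_cong) (simp add: inner)
  also have "\<dots> = ennreal (1 - q) * emeasure (PiM J (\<lambda>_. P)) (E l)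
      + (if l = 0 then 0 else ennreal q * emeasure (PiM J (\<lambda>_. P)) (E (l-1)))"
    using Em by (subst nn_integral_add) (auto simp: nn_integral_cmult)
  also have "\<dots> = ennreal ((1 - q) * bt (card J) l q + (if l = 0 then 0 else q * bt (card J) (l-1) q))"
    using insert(3) q01 by (simp add: E_def q_def ennreal_mult bt_nonneg ennreal_plus)
  also have "\<dots> = ennreal (bt (card (insert j J)) l q)"
    using insert(1,2) by (simp add: bt_pascal)
  finally show ?case by (simp add: E'_def q_def)
qed

lemma tail_prob:
  assumes P: "prob_space P" and A: "A \<in> sets P" and J: "finite J"
  shows "measure (PiM J (\<lambda>_. P)) {\<omega> \<in> space (PiM J (\<lambda>_. P)). Q (card {i\<in>J. \<omega> i \<in> A})}
       = (\<Sum>l\<in>{l\<in>{0..card J}. Q l}. bt (card J) l (measure P A))"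
proof -
  let ?N = "PiM J (\<lambda>_. P)"
  interpret N: prob_space ?N using P by (intro prob_space_PiM) auto
  define E where "E = (\<lambda>l. {\<omega> \<in> space ?N. card {i\<in>J. \<omega> i \<in> A} = l})"
  have "{\<omega> \<in> space ?N. Q (card {i\<in>J. \<omega> i \<in> A})} = (\<Union>l\<in>{l\<in>{0..card J}. Q l}. E l)"
    using J by (auto simp: E_def intro: card_mono)
  moreover have "measure ?N (\<Union>l\<in>{l\<in>{0..card J}. Q l}. E l) = (\<Sum>l\<in>{l\<in>{0..card J}. Q l}. measure ?N (E l))"
    by (intro measure_finite_Union) (auto simp: E_def disjoint_family_on_def intro: meas_card[OF A J])
  moreover have "measure ?N (E l) = bt (card J) l (measure P A)" for l
  proof -
    have "ennreal (measure ?N (E l)) = ennreal (bt (card J) l (measure P A))"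
      using binom_dist[OF P A J, of l] by (simp add: E_def N.emeasure_eq_measure)
    moreover have "0 \<le> bt (card J) l (measure P A)"
      using P by (intro bt_nonneg) (auto intro: prob_space.prob_le_1)
    ultimately show ?thesis by simp
  qed
  ultimately show ?thesis by simp
qed

lemma meas_card_fun:
  assumes "A \<in> sets P" "finite J"
  shows "(\<lambda>\<omega>. card {i\<in>J. \<omega> i \<in> A}) \<in> measurable (PiM J (\<lambda>_. P)) (count_space UNIV)"
proof -
  have "(\<lambda>\<omega>. card {i\<in>J. \<omega> i \<in> A}) -` {l} \<inter> space (PiM J (\<lambda>_. P))
      = {\<omega> \<in> space (PiM J (\<lambda>_. P)). card {i\<in>J. \<omega> i \<in> A} = l}" for l by auto
  then show ?thesis using meas_card[OF assms]
    by (simp add: measurable_count_space_eq2_countable)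
qed

theorem theorem2:
  fixes X :: "'x::euclidean_space set" and U :: "'u::euclidean_space set"
    and W :: "'w::euclidean_space set"
    and f :: "'x \<Rightarrow> 'u \<Rightarrow> 'w \<Rightarrow> 'x" and R :: "nat \<Rightarrow> 'x set" and v :: nat
    and ubar :: "'u set" and Acts :: "'act set" and Act :: "abs_state \<Rightarrow> 'act set"
    and I :: "abs_state \<Rightarrow> 'act \<Rightarrow> 'x \<Rightarrow> 'u"
    and P :: "'o measure" and \<eta> :: "'o \<Rightarrow> 'w"
    and s s' :: abs_state and a :: 'act and M :: nat and \<beta> :: real
  assumes sys: "imdp_system X U W f R v ubar Acts Act I P \<eta>"
    and s: "s \<in> abs_states v" and s': "s' \<in> abs_states v" and a: "a \<in> Act s"
    and meas_psi: "\<forall>x\<in>region R X s.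
      {\<omega> \<in> space P. f x (I (absmap R v X x) a x) (\<eta> \<omega>) \<in> region R X s'} \<in> sets P"
    and meas_sub: "{\<omega> \<in> space P.
      fwd f I (absmap R v X) \<eta> (region R X s) a \<omega> \<subseteq> region R X s'} \<in> sets P"
    and meas_hit: "{\<omega> \<in> space P.
      fwd f I (absmap R v X) \<eta> (region R X s) a \<omega> \<inter> region R X s' \<noteq> {}} \<in> sets P"
    and \<beta>: "0 < \<beta>" "\<beta> < 1"
  shows "measure (PiM {1..M} (\<lambda>_. P))
    {\<omega>s \<in> space (PiM {1..M} (\<lambda>_. P)).
       cp_lower M (card {i \<in> {1..M}.
           fwd f I (absmap R v X) \<eta> (region R X s) a (\<omega>s i) \<subseteq> region R X s'}) \<beta>
         \<le> (INF x\<in>region R X s. psi P f I (absmap R v X) \<eta> x (region R X s') a)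
     \<and> (SUP x\<in>region R X s. psi P f I (absmap R v X) \<eta> x (region R X s') a)
         \<le> cp_upper M (card {i \<in> {1..M}.
           fwd f I (absmap R v X) \<eta> (region R X s) a (\<omega>s i) \<inter> region R X s' \<noteq> {}}) \<beta>}
    \<ge> 1 - \<beta>"
proof -
  have Pprob: "prob_space P" using sys by (simp add: imdp_system_def)
  interpret P: prob_space P by (rule Pprob)
  define N where "N = PiM {1..M} (\<lambda>_. P)"
  interpret N: prob_space N unfolding N_def using Pprob by (intro prob_space_PiM) auto
  define T where "T = absmap R v X"
  define Rs where "Rs = region R X s"
  define Rs' where "Rs' = region R X s'"
  define Fw where "Fw = fwd f I T \<eta> Rs a"
  define Ac where "Ac = {\<omega> \<in> space P. Fw \<omega> \<subseteq> Rs'}"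
  define Ah where "Ah = {\<omega> \<in> space P. Fw \<omega> \<inter> Rs' \<noteq> {}}"
  define qc where "qc = measure P Ac"
  define qh where "qh = measure P Ah"
  define Kc where "Kc = (\<lambda>\<omega>s. card {i\<in>{1..M}. \<omega>s i \<in> Ac})"
  define Kh where "Kh = (\<lambda>\<omega>s. card {i\<in>{1..M}. \<omega>s i \<in> Ah})"
  define ps where "ps = (\<lambda>x. psi P f I T \<eta> x Rs' a)"
  have Acm: "Ac \<in> sets P" using meas_sub by (simp add: Ac_def Fw_def T_def Rs_def Rs'_def)
  have Ahm: "Ah \<in> sets P" using meas_hit by (simp add: Ah_def Fw_def T_def Rs_def Rs'_def)
  have Rsne: "Rs \<noteq> {}"
  proof -
    from s consider i where "s = Reg i" "i \<in> {1..v}" | "s = Star" by (auto simp: abs_states_def)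
    then show ?thesis
    proof cases
      case 1 then show ?thesis using sys by (simp add: imdp_system_def Rs_def)
    next
      case 2
      have "bounded X" using sys by (simp add: imdp_system_def compact_imp_bounded)
      then have "X \<noteq> UNIV" by auto
      then show ?thesis using 2 by (auto simp: Rs_def)
    qed
  qed
  have psi_ge: "qc \<le> ps x" and psi_le: "ps x \<le> qh" if x: "x \<in> Rs" for x
  proof -
    define B where "B = {\<omega> \<in> space P. f x (I (T x) a x) (\<eta> \<omega>) \<in> Rs'}"
    have Bm: "B \<in> sets P" using meas_psi x by (simp add: B_def T_def Rs_def Rs'_def)
    have inF: "f x (I (T x) a x) (\<eta> \<omega>) \<in> Fw \<omega>" for \<omega>
      using x by (auto simp: Fw_def fwd_def)
    have "Ac \<subseteq> B" using inF by (auto simp: Ac_def B_def)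
    then show "qc \<le> ps x" using Bm by (simp add: qc_def ps_def psi_def B_def P.finite_measure_mono)
    have "B \<subseteq> Ah" using inF by (auto simp: Ah_def B_def)
    then show "ps x \<le> qh" using Ahm by (simp add: qh_def ps_def psi_def B_def P.finite_measure_mono)
  qed
  have INF_ge: "qc \<le> (INF x\<in>Rs. ps x)" using Rsne psi_ge by (intro cINF_greatest) auto
  have SUP_le: "(SUP x\<in>Rs. ps x) \<le> qh" using Rsne psi_le by (intro cSUP_least) auto
  have cardeq: "card {i \<in> {1..M}. Fw (\<omega>s i) \<subseteq> Rs'} = Kc \<omega>s"
     "card {i \<in> {1..M}. Fw (\<omega>s i) \<inter> Rs' \<noteq> {}} = Kh \<omega>s"
    if "\<omega>s \<in> space N" for \<omega>s
  proof -
    have sp: "\<omega>s i \<in> space P" if "i \<in> {1..M}" for i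
      using \<open>\<omega>s \<in> space N\<close> that by (auto simp: N_def space_PiM)
    show "card {i \<in> {1..M}. Fw (\<omega>s i) \<subseteq> Rs'} = Kc \<omega>s"
      unfolding Kc_def Ac_def by (intro arg_cong[where f=card]) (use sp in auto)
    show "card {i \<in> {1..M}. Fw (\<omega>s i) \<inter> Rs' \<noteq> {}} = Kh \<omega>s"
      unfolding Kh_def Ah_def by (intro arg_cong[where f=card]) (use sp in auto)
  qed
  define B1 where "B1 = {\<omega>s \<in> space N. qc < cp_lower M (Kc \<omega>s) \<beta>}"
  define B2 where "B2 = {\<omega>s \<in> space N. cp_upper M (Kh \<omega>s) \<beta> < qh}"
  have Kcm: "Kc \<in> measurable N (count_space UNIV)"
    unfolding N_def Kc_def by (rule meas_card_fun[OF Acm]) simp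
  have Khm: "Kh \<in> measurable N (count_space UNIV)"
    unfolding N_def Kh_def by (rule meas_card_fun[OF Ahm]) simp
  have B1m: "B1 \<in> sets N"
  proof -
    have "B1 = (\<lambda>\<omega>s. qc < cp_lower M (Kc \<omega>s) \<beta>) -` {True} \<inter> space N" by (auto simp: B1_def)
    also have "\<dots> \<in> sets N"
      by (rule measurable_sets[OF measurable_compose[OF Kcm measurable_count_space]]) simp
    finally show ?thesis .
  qed
  have B2m: "B2 \<in> sets N"
  proof -
    have "B2 = (\<lambda>\<omega>s. cp_upper M (Kh \<omega>s) \<beta> < qh) -` {True} \<inter> space N" by (auto simp: B2_def)
    also have "\<dots> \<in> sets N"
      by (rule measurable_sets[OF measurable_compose[OF Khm measurable_count_space]]) simp
    finally show ?thesis .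
  qed
  have mB1: "measure N B1 \<le> \<beta> / 2"
  proof -
    have "measure N B1 = (\<Sum>l\<in>{l\<in>{0..M}. qc < cp_lower M l \<beta>}. bt M l qc)"
      using tail_prob[OF Pprob Acm, of "{1..M}" "\<lambda>k. qc < cp_lower M k \<beta>"]
      by (simp add: B1_def N_def Kc_def qc_def)
    also have "\<dots> \<le> \<beta> / 2" using \<beta> by (intro cover_lower) (auto simp: qc_def)
    finally show ?thesis .
  qed
  have mB2: "measure N B2 \<le> \<beta> / 2"
  proof -
    have "measure N B2 = (\<Sum>l\<in>{l\<in>{0..M}. cp_upper M l \<beta> < qh}. bt M l qh)"
      using tail_prob[OF Pprob Ahm, of "{1..M}" "\<lambda>k. cp_upper M k \<beta> < qh"]
      by (simp add: B2_def N_def Kh_def qh_def)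
    also have "\<dots> \<le> \<beta> / 2" using \<beta> by (intro cover_upper) (auto simp: qh_def)
    finally show ?thesis .
  qed
  define E where "E = {\<omega>s \<in> space N.
       cp_lower M (card {i \<in> {1..M}. Fw (\<omega>s i) \<subseteq> Rs'}) \<beta> \<le> (INF x\<in>Rs. ps x)
     \<and> (SUP x\<in>Rs. ps x) \<le> cp_upper M (card {i \<in> {1..M}. Fw (\<omega>s i) \<inter> Rs' \<noteq> {}}) \<beta>}"
  have E_eq: "E = {\<omega>s \<in> space N. cp_lower M (Kc \<omega>s) \<beta> \<le> (INF x\<in>Rs. ps x)
     \<and> (SUP x\<in>Rs. ps x) \<le> cp_upper M (Kh \<omega>s) \<beta>}"
    unfolding E_def using cardeq by auto
  have Em: "E \<in> sets N"
  proof -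
    have "E = (\<lambda>\<omega>s. (\<lambda>k \<omega>s. cp_lower M k \<beta> \<le> (INF x\<in>Rs. ps x)
     \<and> (SUP x\<in>Rs. ps x) \<le> cp_upper M (Kh \<omega>s) \<beta>) (Kc \<omega>s) \<omega>s) -` {True} \<inter> space N"
      by (auto simp: E_eq)
    also have "\<dots> \<in> sets N"
    proof (rule measurable_sets[OF measurable_compose_countable[OF _ Kcm]])
      fix k
      show "(\<lambda>\<omega>s. cp_lower M k \<beta> \<le> (INF x\<in>Rs. ps x) \<and> (SUP x\<in>Rs. ps x) \<le> cp_upper M (Kh \<omega>s) \<beta>)
         \<in> measurable N (count_space UNIV)"
        by (rule measurable_compose[OF Khm measurable_count_space])
    qed simp
    finally show ?thesis .
  qed
  have sub: "space N - (B1 \<union> B2) \<subseteq> E"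
    using INF_ge SUP_le by (auto simp: E_eq B1_def B2_def not_less intro: order_trans)
  have "1 - \<beta> \<le> 1 - (measure N B1 + measure N B2)" using mB1 mB2 by simp
  also have "\<dots> \<le> 1 - measure N (B1 \<union> B2)" using measure_subadditive[OF B1m B2m] by (simp add: N.emeasure_eq_measure)
  also have "\<dots> = measure N (space N - (B1 \<union> B2))"
    using N.prob_compl[of "B1 \<union> B2"] B1m B2m by simp
  also have "\<dots> \<le> measure N E" using sub Em by (intro N.finite_measure_mono)
  finally have "1 - \<beta> \<le> measure N E" .
  then show ?thesis
    by (simp add: E_def N_def Fw_def T_def Rs_def Rs'_def ps_def)
qed

end
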